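(* Let $u(\mathbf{x},\Gamma_{\epsilon\boldsymbol{\omega}})$ be the scattered field of the impenetrable scattering problem with the randomly perturbed boundary $\Gamma_{\epsilon\boldsymbol{\omega}}=\Gamma+\epsilon\sum_{j=1}^m\omega_j\mathbf{v}_j$, and write $u(\mathbf{x})=u(\mathbf{x},\Gamma)$. Then, for $\mathbf{x}$ in the exterior of the (perturbed) scatterers, $$\mathbb{E}[u](\mathbf{x})=\mathbb{M}^1[u](\mathbf{x})=u(\mathbf{x})+\frac{\epsilon^2}{3!}\sum_{i=1}^m\delta_{[\mathbf{v}_i,\mathbf{v}_i]}u(\mathbf{x})+\mathcal{O}(\epsilon^4),$$ $$\mathbb{M}^2[u](\mathbf{x})=u^2(\mathbf{x})+\frac{\epsilon^2}{3}\sum_{i=1}^m\Big((\delta_{\mathbf{v}_i}u(\mathbf{x}))^2+u(\mathbf{x})\,\delta_{[\mathbf{v}_i,\mathbf{v}_i]}u(\mathbf{x})\Big)+\mathcal{O}(\epsilon^4),$$ and for every integer $n>2$, $$\mathbb{M}^n[u](\mathbf{x})=u^n(\mathbf{x})+\frac{\epsilon^2}{3}\sum_{i=1}^m\left(\binom n2u^{n-2}(\mathbf{x})(\delta_{\mathbf{v}_i}u(\mathbf{x}))^2+\binom n1u^{n-1}(\mathbf{x})\frac12\delta_{[\mathbf{v}_i,\mathbf{v}_i]}u(\mathbf{x})\right)+\mathcal{O}(\epsilon^4)$$ as $\epsilon\to0$.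
   Context: $D\subset\mathbb{R}^2$ is a bounded simply connected open set with smooth boundary $\Gamma$. For a boundary $\Gamma'$, the scattered field $u(\cdot,\Gamma')$ is defined outside the scatterer bounded by $\Gamma'$: the total field $u_{\rm tot}=\phi+u$ (with $\phi$ a plane wave or point-source incident field) satisfies $\nabla\cdot\alpha\nabla u_{\rm tot}+k^2u_{\rm tot}=0$ ($\alpha>0$, $k>0$ constants) in the exterior, with a sound-soft, sound-hard, or impedance boundary condition on $\Gamma'$, and $u$ satisfies the Sommerfeld radiation condition. The velocity fields $\mathbf{v}_1,\dots,\mathbf{v}_m\in C^\infty(\mathbb{R}^2,\mathbb{R}^2)$ have compact support in a band around $\Gamma$; $\delta_{\mathbf{v}_{i_1}}u$, $\delta_{[\mathbf{v}_{i_1},\mathbf{v}_{i_2}]}u,\dots$ denote the first, second, ... order shape derivatives of $u$ with respect to these velocity fields, and the field is assumed to admit the multivariate shape Taylor expansion $u(\mathbf{x},\Gamma_{\epsilon\boldsymbol\omega})=u(\mathbf{x})+\sum_{q=1}^{N}\frac{\epsilon^q}{q!}\sum_{i_1,\dots,i_q=1}^m\big(\prod_{j=1}^q\omega_{i_j}\big)\delta_{[\mathbf{v}_{i_1},\dots,\mathbf{v}_{i_q}]}u(\mathbf{x})+\mathcal{O}(\epsilon^{N+1})$ uniformly in $\boldsymbol\omega$. The random vector $\boldsymbol{\omega}=(\omega_1,\dots,\omega_m)$ has independent components, each uniformly distributed on $[-1,1]$, with density $P$. The $n$th moment is $\mathbb{M}^n[u](\mathbf{x})=\int[u(\mathbf{x},\Gamma_{\epsilon\boldsymbol\omega})]^nP(\boldsymbol\omega)\,d\boldsymbol\omega$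 and $\mathbb{E}[u]=\mathbb{M}^1[u]$. *)

theory Defs
  imports "HOL-Probability.Probability"
begin

definition omega_law :: "nat \<Rightarrow> (nat \<Rightarrow> real) measure" where
  "omega_law m = PiM {..<m} (\<lambda>_. uniform_measure lborel {-1..1::real})"

definition multi_idx :: "nat \<Rightarrow> nat \<Rightarrow> nat list set" where
  "multi_idx m q = {is. length is = q \<and> set is \<subseteq> {..<m}}"

text \<open>Truncated multivariate shape Taylor polynomial of order N:
  u(x) + sum_{q=1}^N eps^q/q! sum_{i_1..i_q} (prod_j omega_{i_j}) delta_[v_{i_1},...,v_{i_q}] u(x),
  where D [] = u(x) and D [i_1,...,i_q] = delta_[v_{i_1},...,v_{i_q}] u(x).\<close>
definition shape_taylor ::
  "nat \<Rightarrow> nat \<Rightarrow> (nat list \<Rightarrow> complex) \<Rightarrow> real \<Rightarrow> (nat \<Rightarrow> real) \<Rightarrow> complex" where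
  "shape_taylor m N D \<epsilon> \<omega> = D [] +
     (\<Sum>q\<in>{1..N}. complex_of_real (\<epsilon> ^ q / fact q) *
        (\<Sum>is\<in>multi_idx m q. complex_of_real (prod_list (map \<omega> is)) * D is))"

text \<open>n-th moment M^n[u](x) = int [u(x, Gamma_{eps omega})]^n P(omega) d omega,
  where U eps omega = u(x, Gamma_{eps omega}) for the fixed observation point x.\<close>
definition moment ::
  "nat \<Rightarrow> nat \<Rightarrow> (real \<Rightarrow> (nat \<Rightarrow> real) \<Rightarrow> complex) \<Rightarrow> real \<Rightarrow> complex" where
  "moment m n U \<epsilon> = (\<integral>\<omega>. (U \<epsilon> \<omega>) ^ n \<partial>omega_law m)"

end

theory Submission
  imports Defs
begin


abbreviation umu :: "real measure" where "umu \<equiv> uniform_measure lborel {-1..1::real}"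

lemma prob_umu: "prob_space umu"
  by (rule prob_space_uniform_measure) auto

lemma prob_L: "prob_space (omega_law m)"
  unfolding omega_law_def by (rule prob_space_PiM) (rule prob_umu)

lemma space_L: "space (omega_law m) = PiE {..<m} (\<lambda>_. UNIV)"
  unfolding omega_law_def by (simp add: space_PiM)

lemma AE_box: "AE \<omega> in omega_law m. \<forall>i\<in>{..<m}. \<bar>\<omega> i\<bar> \<le> 1"
proof -
  have "AE \<omega> in omega_law m. \<forall>i\<in>{..<m}. \<bar>\<omega> i\<bar> \<le> 1"
  proof (rule AE_finite_allI)
    fix i assume i: "i \<in> {..<m}"
    have "AE x in umu. \<bar>x\<bar> \<le> 1"
      by (rule AE_uniform_measureI) auto
    then show "AE \<omega> in omega_law m. \<bar>\<omega> i\<bar> \<le> 1"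
      unfolding omega_law_def using i
      by (intro AE_PiM_component[where P="\<lambda>x. \<bar>x\<bar> \<le> 1"]) (auto intro: prob_umu)
  qed simp
  then show ?thesis .
qed

lemma meas_comp[measurable]: "i < m \<Longrightarrow> (\<lambda>\<omega>. \<omega> i) \<in> borel_measurable (omega_law m)"
proof -
  assume "i < m"
  then have "(\<lambda>\<omega>. \<omega> i) \<in> measurable (PiM {..<m} (\<lambda>_. umu)) umu"
    by (intro measurable_component_singleton) auto
  moreover have "measurable (PiM {..<m} (\<lambda>_. umu)) umu = measurable (PiM {..<m} (\<lambda>_. umu)) borel"
    by (rule measurable_cong_sets) auto
  ultimately show ?thesis unfolding omega_law_def by simp
qed

lemma uminus_borel: "A \<in> sets borel \<Longrightarrow> uminus -` A \<in> sets (borel::real measure)"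
proof -
  assume A: "A \<in> sets borel"
  have um: "(uminus::real\<Rightarrow>real) \<in> borel_measurable borel" by simp
  show ?thesis using measurable_sets[OF um A] by simp
qed

lemma umu_sym: "emeasure umu (uminus -` A) = emeasure umu A" if A: "A \<in> sets borel" for A :: "real set"
proof -
  have um: "(uminus::real\<Rightarrow>real) \<in> borel_measurable borel" by simp
  have A': "uminus -` A \<in> sets borel" using measurable_sets[OF um A] by simp
  have "emeasure lborel ({-1..1} \<inter> uminus -` A) = emeasure lborel (uminus -` ({-1..1} \<inter> A) \<inter> space lborel)"
    by (intro arg_cong[where f="emeasure lborel"]) auto
  also have "\<dots> = emeasure (distr lborel borel uminus) ({-1..1} \<inter> A)"
    using A by (subst emeasure_distr) auto
  also have "\<dots> = emeasure lborel ({-1..1} \<inter> A)" by (simp add: lborel_distr_uminus)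
  finally show ?thesis using A A' by simp
qed

definition oflip :: "nat \<Rightarrow> nat set \<Rightarrow> (nat \<Rightarrow> real) \<Rightarrow> (nat \<Rightarrow> real)" where
  "oflip m S \<omega> = (\<lambda>k\<in>{..<m}. if k \<in> S then - \<omega> k else \<omega> k)"

lemma flip_meas[measurable]: "oflip m S \<in> measurable (omega_law m) (omega_law m)"
  unfolding oflip_def omega_law_def
  by (intro measurable_restrict) (auto intro!: measurable_component_singleton)

lemma distr_flip: "distr (omega_law m) (omega_law m) (oflip m S) = omega_law m"
proof -
  interpret P: product_prob_space "\<lambda>_. umu"
    by (intro product_prob_spaceI prob_umu)
  show ?thesis unfolding omega_law_def
  proof (rule P.PiM_eqI)
    show "sets (distr (Pi\<^sub>M {..<m} (\<lambda>_. umu)) (Pi\<^sub>M {..<m} (\<lambda>_. umu)) (oflip m S)) = sets (Pi\<^sub>M {..<m} (\<lambda>_. umu))"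
      by simp
    fix A assume A: "\<And>i. i \<in> {..<m} \<Longrightarrow> A i \<in> sets umu"
    let ?g = "\<lambda>i::nat. if i \<in> S then (uminus::real\<Rightarrow>real) -` A i else A i"
    have "emeasure (distr (Pi\<^sub>M {..<m} (\<lambda>_. umu)) (Pi\<^sub>M {..<m} (\<lambda>_. umu)) (oflip m S)) (Pi\<^sub>E {..<m} A)
        = emeasure (Pi\<^sub>M {..<m} (\<lambda>_. umu)) (oflip m S -` Pi\<^sub>E {..<m} A \<inter> space (Pi\<^sub>M {..<m} (\<lambda>_. umu)))"
      using A flip_meas[of m S] unfolding omega_law_def
      by (intro emeasure_distr) (auto intro!: sets_PiM_I_finite)
    also have "oflip m S -` Pi\<^sub>E {..<m} A \<inter> space (Pi\<^sub>M {..<m} (\<lambda>_. umu)) = Pi\<^sub>E {..<m} ?g"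
      by (auto simp: space_PiM PiE_def Pi_def extensional_def oflip_def split: if_splits)
    also have "emeasure (Pi\<^sub>M {..<m} (\<lambda>_. umu)) (Pi\<^sub>E {..<m} ?g) = (\<Prod>i<m. emeasure umu (?g i))"
      using A by (intro P.emeasure_PiM) (auto simp: uminus_borel)
    also have "\<dots> = (\<Prod>i<m. emeasure umu (A i))"
      using A by (intro prod.cong refl) (simp add: umu_sym del: emeasure_uniform_measure)
    finally show "emeasure (distr (Pi\<^sub>M {..<m} (\<lambda>_. umu)) (Pi\<^sub>M {..<m} (\<lambda>_. umu)) (oflip m S)) (Pi\<^sub>E {..<m} A) = (\<Prod>i\<in>{..<m}. emeasure umu (A i))"
      by simp
  qed simp
qed

lemma integral_flip:
  fixes f :: "(nat \<Rightarrow> real) \<Rightarrow> 'b::{banach, second_countable_topology}"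
  assumes "f \<in> borel_measurable (omega_law m)"
  shows "(\<integral>\<omega>. f (oflip m S \<omega>) \<partial>omega_law m) = (\<integral>\<omega>. f \<omega> \<partial>omega_law m)"
  using integral_distr[OF flip_meas[of m S] assms] by (simp add: distr_flip)



lemma integral_odd:
  fixes f :: "(nat \<Rightarrow> real) \<Rightarrow> 'b::{banach, second_countable_topology}"
  assumes "f \<in> borel_measurable (omega_law m)" and "\<And>\<omega>. f (oflip m S \<omega>) = - f \<omega>"
  shows "(\<integral>\<omega>. f \<omega> \<partial>omega_law m) = 0"
proof -
  have "(\<integral>\<omega>. f \<omega> \<partial>omega_law m) = (\<integral>\<omega>. f (oflip m S \<omega>) \<partial>omega_law m)"
    using integral_flip[OF assms(1)] by simp
  also have "\<dots> = - (\<integral>\<omega>. f \<omega> \<partial>omega_law m)" by (simp add: assms(2))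
  finally have "(\<integral>\<omega>. f \<omega> \<partial>omega_law m) + (\<integral>\<omega>. f \<omega> \<partial>omega_law m) = 0"
    by (metis add.right_inverse)
  then have "(2::real) *\<^sub>R (\<integral>\<omega>. f \<omega> \<partial>omega_law m) = 0" by (simp add: scaleR_2)
  then show ?thesis by simp
qed

lemma E_cross: "i < m \<Longrightarrow> j < m \<Longrightarrow> i \<noteq> j \<Longrightarrow> (\<integral>\<omega>. \<omega> i * \<omega> j \<partial>omega_law m) = 0"
  by (rule integral_odd[where S="{i}"]) (auto simp: oflip_def)

lemma umu_sq: "(\<integral>x. x^2 \<partial>umu) = 1/3"
proof -
  have "umu = density lborel (\<lambda>x. ennreal (indicator {-1..1::real} x / 2))"
    unfolding uniform_measure_def
    by (intro density_cong) (auto split: split_indicator simp: divide_ennreal_def)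
  then have "(\<integral>x. x^2 \<partial>umu) = (\<integral>x. (indicator {-1..1::real} x / 2) *\<^sub>R x^2 \<partial>lborel)"
    by (simp add: integral_density)
  also have "\<dots> = (\<integral>x. x^2 * indicator {-1..1::real} x \<partial>lborel) / 2"
    by (simp add: mult.commute)
  also have "\<dots> = 1/3" by (subst integral_power) auto
  finally show ?thesis .
qed

lemma E_sq: "i < m \<Longrightarrow> (\<integral>\<omega>. \<omega> i * \<omega> i \<partial>omega_law m) = 1/3"
proof -
  assume i: "i < m"
  have d: "distr (omega_law m) umu (\<lambda>\<omega>. \<omega> i) = umu"
    unfolding omega_law_def using i by (intro distr_PiM_component prob_umu) auto
  have g: "(\<lambda>\<omega>. \<omega> i) \<in> measurable (omega_law m) umu"
    unfolding omega_law_def using i by (intro measurable_component_singleton) auto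
  have e: "measurable umu borel = measurable borel borel" by (rule measurable_cong_sets) auto
  have "(\<lambda>x::real. x^2) \<in> borel_measurable borel" by measurable
  then have pm: "(\<lambda>x::real. x^2) \<in> borel_measurable umu" by (subst e)
  have "(\<integral>x. x^2 \<partial>umu) = (\<integral>\<omega>. (\<omega> i)^2 \<partial>omega_law m)"
    using integral_distr[OF g pm] d by simp
  then show ?thesis using umu_sq by (simp add: power2_eq_square)
qed



definition obox :: "nat \<Rightarrow> (nat \<Rightarrow> real) set" where
  "obox m = space (omega_law m) \<inter> {\<omega>. \<forall>i\<in>{..<m}. \<bar>\<omega> i\<bar> \<le> 1}"

lemma AE_in_box: "AE \<omega> in omega_law m. \<omega> \<in> obox m"
  using AE_box[of m] AE_space[of "omega_law m"] unfolding obox_def by eventually_elim auto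

definition G :: "nat \<Rightarrow> real \<Rightarrow> (real \<Rightarrow> (nat \<Rightarrow> real) \<Rightarrow> complex) \<Rightarrow> bool" where
  "G m \<delta> R \<longleftrightarrow> (\<forall>\<epsilon>. R \<epsilon> \<in> borel_measurable (omega_law m)) \<and>
     (\<exists>K. \<forall>\<epsilon> \<omega>. \<bar>\<epsilon>\<bar> < \<delta> \<longrightarrow> \<omega> \<in> obox m \<longrightarrow> norm (R \<epsilon> \<omega>) \<le> K)"

lemma G_add: "G m \<delta> f \<Longrightarrow> G m \<delta> g \<Longrightarrow> G m \<delta> (\<lambda>\<epsilon> \<omega>. f \<epsilon> \<omega> + g \<epsilon> \<omega>)"
  unfolding G_def
proof (elim conjE exE, intro conjI allI exI impI)
  fix K1 K2 \<epsilon> \<omega>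
  assume f: "\<forall>\<epsilon> \<omega>. \<bar>\<epsilon>\<bar> < \<delta> \<longrightarrow> \<omega> \<in> obox m \<longrightarrow> norm (f \<epsilon> \<omega>) \<le> K1"
     and g: "\<forall>\<epsilon> \<omega>. \<bar>\<epsilon>\<bar> < \<delta> \<longrightarrow> \<omega> \<in> obox m \<longrightarrow> norm (g \<epsilon> \<omega>) \<le> K2"
     and "\<bar>\<epsilon>\<bar> < \<delta>" "\<omega> \<in> obox m"
  then have "norm (f \<epsilon> \<omega>) \<le> K1" "norm (g \<epsilon> \<omega>) \<le> K2" by auto
  then show "norm (f \<epsilon> \<omega> + g \<epsilon> \<omega>) \<le> K1 + K2" using norm_triangle_ineq[of "f \<epsilon> \<omega>" "g \<epsilon> \<omega>"] by linarith
next
  fix \<epsilon> assume "\<forall>\<epsilon>. f \<epsilon> \<in> borel_measurable (omega_law m)" "\<forall>\<epsilon>. g \<epsilon> \<in> borel_measurable (omega_law m)"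
  then show "(\<lambda>\<omega>. f \<epsilon> \<omega> + g \<epsilon> \<omega>) \<in> borel_measurable (omega_law m)" by (intro borel_measurable_add) auto
qed

lemma G_mult: "G m \<delta> f \<Longrightarrow> G m \<delta> g \<Longrightarrow> G m \<delta> (\<lambda>\<epsilon> \<omega>. f \<epsilon> \<omega> * g \<epsilon> \<omega>)"
  unfolding G_def
proof (elim conjE exE, intro conjI allI exI impI)
  fix K1 K2 \<epsilon> \<omega>
  assume f: "\<forall>\<epsilon> \<omega>. \<bar>\<epsilon>\<bar> < \<delta> \<longrightarrow> \<omega> \<in> obox m \<longrightarrow> norm (f \<epsilon> \<omega>) \<le> K1"
     and g: "\<forall>\<epsilon> \<omega>. \<bar>\<epsilon>\<bar> < \<delta> \<longrightarrow> \<omega> \<in> obox m \<longrightarrow> norm (g \<epsilon> \<omega>) \<le> K2"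
     and "\<bar>\<epsilon>\<bar> < \<delta>" "\<omega> \<in> obox m"
  then have a: "norm (f \<epsilon> \<omega>) \<le> \<bar>K1\<bar>" "norm (g \<epsilon> \<omega>) \<le> \<bar>K2\<bar>" by force+
  have "norm (f \<epsilon> \<omega> * g \<epsilon> \<omega>) = norm (f \<epsilon> \<omega>) * norm (g \<epsilon> \<omega>)" by (simp add: norm_mult)
  also have "\<dots> \<le> \<bar>K1\<bar> * \<bar>K2\<bar>" using a by (intro mult_mono) auto
  finally show "norm (f \<epsilon> \<omega> * g \<epsilon> \<omega>) \<le> \<bar>K1\<bar> * \<bar>K2\<bar>" .
next
  fix \<epsilon> assume "\<forall>\<epsilon>. f \<epsilon> \<in> borel_measurable (omega_law m)" "\<forall>\<epsilon>. g \<epsilon> \<in> borel_measurable (omega_law m)"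
  then show "(\<lambda>\<omega>. f \<epsilon> \<omega> * g \<epsilon> \<omega>) \<in> borel_measurable (omega_law m)" by (intro borel_measurable_times) auto
qed

lemma G_epsfun: "(\<And>\<epsilon>. \<bar>\<epsilon>\<bar> < \<delta> \<Longrightarrow> norm (f \<epsilon>) \<le> K) \<Longrightarrow> G m \<delta> (\<lambda>\<epsilon> \<omega>. f \<epsilon>)"
  unfolding G_def by auto

lemma G_const: "G m \<delta> (\<lambda>\<epsilon> \<omega>. c)"
  by (rule G_epsfun[where K="norm c"]) auto

lemma G_eps: "\<delta> \<le> 1 \<Longrightarrow> G m \<delta> (\<lambda>\<epsilon> \<omega>. complex_of_real \<epsilon>)"
  by (rule G_epsfun[where K=1]) auto

lemma G_sum: "finite A \<Longrightarrow> (\<And>q. q \<in> A \<Longrightarrow> G m \<delta> (f q)) \<Longrightarrow> G m \<delta> (\<lambda>\<epsilon> \<omega>. \<Sum>q\<in>A. f q \<epsilon> \<omega>)"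
proof (induction A rule: finite_induct)
  case empty then show ?case using G_const[of m \<delta> 0] by simp
next
  case (insert x F)
  then show ?case using G_add[of m \<delta> "f x" "\<lambda>\<epsilon> \<omega>. \<Sum>q\<in>F. f q \<epsilon> \<omega>"] by simp
qed

lemma G_pow: "G m \<delta> f \<Longrightarrow> G m \<delta> (\<lambda>\<epsilon> \<omega>. f \<epsilon> \<omega> ^ n)"
proof (induction n)
  case 0 then show ?case using G_const[of m \<delta> 1] by simp
next
  case (Suc n) then show ?case using G_mult[of m \<delta> f "\<lambda>\<epsilon> \<omega>. f \<epsilon> \<omega> ^ n"] by simp
qed

lemma G_integrable: "G m \<delta> R \<Longrightarrow> \<bar>\<epsilon>\<bar> < \<delta> \<Longrightarrow> integrable (omega_law m) (R \<epsilon>)"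
proof -
  assume "G m \<delta> R" "\<bar>\<epsilon>\<bar> < \<delta>"
  then obtain K where K: "\<And>\<omega>. \<omega> \<in> obox m \<Longrightarrow> norm (R \<epsilon> \<omega>) \<le> K" and me: "R \<epsilon> \<in> borel_measurable (omega_law m)"
    unfolding G_def by blast
  interpret prob_space "omega_law m" by (rule prob_L)
  show ?thesis
    by (rule integrable_const_bound[where B=K]) (use AE_in_box[of m] K me in \<open>auto elim: eventually_mono\<close>)
qed

lemma G_integral_bound: "G m \<delta> R \<Longrightarrow> \<exists>K. \<forall>\<epsilon>. \<bar>\<epsilon>\<bar> < \<delta> \<longrightarrow> norm (\<integral>\<omega>. R \<epsilon> \<omega> \<partial>omega_law m) \<le> K"
proof -
  assume GR: "G m \<delta> R"
  then obtain K where K: "\<And>\<epsilon> \<omega>. \<bar>\<epsilon>\<bar> < \<delta> \<Longrightarrow> \<omega> \<in> obox m \<Longrightarrow> norm (R \<epsilon> \<omega>) \<le> K"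
    unfolding G_def by blast
  interpret prob_space "omega_law m" by (rule prob_L)
  have "norm (\<integral>\<omega>. R \<epsilon> \<omega> \<partial>omega_law m) \<le> K" if e: "\<bar>\<epsilon>\<bar> < \<delta>" for \<epsilon>
  proof -
    have "norm (\<integral>\<omega>. R \<epsilon> \<omega> \<partial>omega_law m) \<le> (\<integral>\<omega>. norm (R \<epsilon> \<omega>) \<partial>omega_law m)"
      by (rule integral_norm_bound)
    also have "\<dots> \<le> (\<integral>\<omega>. K \<partial>omega_law m)"
      using AE_in_box[of m] K e G_integrable[OF GR e]
      by (intro integral_mono_AE) (auto elim: eventually_mono)
    also have "\<dots> = K" by (simp add: prob_space)
    finally show ?thesis .
  qed
  then show ?thesis by blast
qed



lemma prod_exp:
  fixes z :: "'a::comm_ring_1"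
  shows "(A0 + z*A1 + z^2*A2 + z^3*A3 + z^4*R) * (a + z*b + z^2*c + z^3*d + z^4*e) =
    A0*a + z*(A0*b + A1*a) + z^2*(A0*c + A1*b + A2*a) + z^3*(A0*d + A1*c + A2*b + A3*a) +
    z^4*(R*(a + z*b + z^2*c + z^3*d + z^4*e) + e*(A0 + z*A1 + z^2*A2 + z^3*A3) + A1*d + A2*c + A3*b
      + z*(A2*d + A3*c) + z^2*(A3*d))"
  by (simp add: algebra_simps eval_nat_numeral)

lemma coef1:
  fixes a :: "'a::comm_ring_1"
  shows "a * (of_nat n * a^(n-1)) + a^n = of_nat (Suc n) * a^n"
  by (cases n) (simp_all add: algebra_simps)

lemma coef2:
  fixes a :: "'a::comm_ring_1"
  shows "a * (of_nat n * a^(n-1) * c + of_nat (n choose 2) * a^(n-2) * b^2) + of_nat n * a^(n-1) * b * b + a^n * c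
     = of_nat (Suc n) * a^n * c + of_nat (Suc n choose 2) * a^(Suc n - 2) * b^2"
proof (cases n)
  case 0 then show ?thesis by (simp add: numeral_2_eq_2)
next
  case (Suc k)
  note n = Suc
  show ?thesis
  proof (cases k)
    case 0 then show ?thesis using n by (simp add: algebra_simps power2_eq_square numeral_2_eq_2)
  next
    case (Suc j)
    have ch: "Suc n choose 2 = (n choose 2) + n" 
      by (simp add: numeral_2_eq_2)
    show ?thesis using n Suc unfolding ch
      by (simp add: algebra_simps power2_eq_square)
  qed
qed

definition oddf :: "nat \<Rightarrow> ((nat \<Rightarrow> real) \<Rightarrow> complex) \<Rightarrow> bool" where
  "oddf m f \<longleftrightarrow> (\<forall>\<omega>. f (oflip m UNIV \<omega>) = - f \<omega>)"

definition evenf :: "nat \<Rightarrow> ((nat \<Rightarrow> real) \<Rightarrow> complex) \<Rightarrow> bool" where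
  "evenf m f \<longleftrightarrow> (\<forall>\<omega>. f (oflip m UNIV \<omega>) = f \<omega>)"

lemma pow_exp:
  fixes a :: complex
  assumes Gb: "G m \<delta> (\<lambda>_. b)" and Gc: "G m \<delta> (\<lambda>_. c)" and Gd: "G m \<delta> (\<lambda>_. d)" and Ge: "G m \<delta> e"
    and d1: "\<delta> \<le> 1"
    and ob: "oddf m b" and od: "oddf m d" and ec: "evenf m c"
  shows "\<exists>B3 R. G m \<delta> (\<lambda>_. B3) \<and> oddf m B3 \<and> G m \<delta> R \<and>
    (\<forall>\<epsilon> \<omega>. (a + of_real \<epsilon> * b \<omega> + (of_real \<epsilon>)^2 * c \<omega> + (of_real \<epsilon>)^3 * d \<omega> + (of_real \<epsilon>)^4 * e \<epsilon> \<omega>)^n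
       = a^n + of_real \<epsilon> * (of_nat n * a^(n-1) * b \<omega>)
         + (of_real \<epsilon>)^2 * (of_nat n * a^(n-1) * c \<omega> + of_nat (n choose 2) * a^(n-2) * (b \<omega>)^2)
         + (of_real \<epsilon>)^3 * B3 \<omega> + (of_real \<epsilon>)^4 * R \<epsilon> \<omega>)"
proof (induction n)
  case 0
  show ?case
    by (rule exI[of _ "\<lambda>_. 0"], rule exI[of _ "\<lambda>_ _. 0"]) (simp add: G_const oddf_def)
next
  case (Suc n)
  then obtain B3 R where GB3: "G m \<delta> (\<lambda>_. B3)" and oB3: "oddf m B3" and GR: "G m \<delta> R"
    and eq: "\<And>\<epsilon> \<omega>. (a + of_real \<epsilon> * b \<omega> + (of_real \<epsilon>)^2 * c \<omega> + (of_real \<epsilon>)^3 * d \<omega> + (of_real \<epsilon>)^4 * e \<epsilon> \<omega>)^n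
       = a^n + of_real \<epsilon> * (of_nat n * a^(n-1) * b \<omega>)
         + (of_real \<epsilon>)^2 * (of_nat n * a^(n-1) * c \<omega> + of_nat (n choose 2) * a^(n-2) * (b \<omega>)^2)
         + (of_real \<epsilon>)^3 * B3 \<omega> + (of_real \<epsilon>)^4 * R \<epsilon> \<omega>" by blast
  define X1 where "X1 \<omega> = of_nat n * a^(n-1) * b \<omega>" for \<omega>
  define X2 where "X2 \<omega> = of_nat n * a^(n-1) * c \<omega> + of_nat (n choose 2) * a^(n-2) * (b \<omega>)^2" for \<omega>
  define P where "P \<epsilon> \<omega> = a + of_real \<epsilon> * b \<omega> + (of_real \<epsilon>)^2 * c \<omega> + (of_real \<epsilon>)^3 * d \<omega> + (of_real \<epsilon>)^4 * e \<epsilon> \<omega>" for \<epsilon> \<omega>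
  define B3' where "B3' \<omega> = a^n * d \<omega> + X1 \<omega> * c \<omega> + X2 \<omega> * b \<omega> + B3 \<omega> * a" for \<omega>
  define R' where "R' \<epsilon> \<omega> = R \<epsilon> \<omega> * P \<epsilon> \<omega> + e \<epsilon> \<omega> * (a^n + of_real \<epsilon> * X1 \<omega> + (of_real \<epsilon>)^2 * X2 \<omega> + (of_real \<epsilon>)^3 * B3 \<omega>)
     + X1 \<omega> * d \<omega> + X2 \<omega> * c \<omega> + B3 \<omega> * b \<omega> + of_real \<epsilon> * (X2 \<omega> * d \<omega> + B3 \<omega> * c \<omega>) + (of_real \<epsilon>)^2 * (B3 \<omega> * d \<omega>)" for \<epsilon> \<omega>
  have Geps: "G m \<delta> (\<lambda>\<epsilon> \<omega>. complex_of_real \<epsilon>)" by (rule G_eps[OF d1])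
  note GG = G_add G_mult G_pow G_const Geps
  have GX1: "G m \<delta> (\<lambda>_. X1)" unfolding X1_def by (intro GG Gb)
  have GX2: "G m \<delta> (\<lambda>_. X2)" unfolding X2_def by (intro GG Gb Gc)
  have GP: "G m \<delta> P" unfolding P_def by (intro GG Gb Gc Gd Ge)
  have GB3': "G m \<delta> (\<lambda>_. B3')" unfolding B3'_def by (intro GG Gb Gc Gd GX1 GX2 GB3)
  have GR': "G m \<delta> R'" unfolding R'_def by (intro GG Gb Gc Gd Ge GX1 GX2 GB3 GR GP)
  have oB3': "oddf m B3'" using ob od ec oB3 unfolding oddf_def evenf_def B3'_def X1_def X2_def
    by (simp add: algebra_simps power2_eq_square)
  show ?case
  proof (intro exI[of _ B3'] exI[of _ R'] conjI allI)
    show "G m \<delta> (\<lambda>_. B3')" "oddf m B3'" "G m \<delta> R'" by (fact GB3' oB3' GR')+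
    fix \<epsilon> \<omega>
    have "P \<epsilon> \<omega> ^ Suc n = P \<epsilon> \<omega> ^ n * P \<epsilon> \<omega>" by simp
    also have "\<dots> = a^n*a + of_real \<epsilon>*(a^n*b \<omega> + X1 \<omega>*a) + (of_real \<epsilon>)^2*(a^n*c \<omega> + X1 \<omega>*b \<omega> + X2 \<omega>*a)
       + (of_real \<epsilon>)^3 * B3' \<omega> + (of_real \<epsilon>)^4 * R' \<epsilon> \<omega>"
      unfolding eq[of \<epsilon> \<omega>, folded P_def X1_def X2_def]
      unfolding B3'_def R'_def
      unfolding P_def by (rule prod_exp)
    also have "a^n*a + of_real \<epsilon>*(a^n*b \<omega> + X1 \<omega>*a) + (of_real \<epsilon>)^2*(a^n*c \<omega> + X1 \<omega>*b \<omega> + X2 \<omega>*a)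
       = a^Suc n + of_real \<epsilon> * (of_nat (Suc n) * a^(Suc n-1) * b \<omega>)
         + (of_real \<epsilon>)^2 * (of_nat (Suc n) * a^(Suc n-1) * c \<omega> + of_nat (Suc n choose 2) * a^(Suc n-2) * (b \<omega>)^2)"
    proof -
      have "a^n*b \<omega> + X1 \<omega>*a = (a * (of_nat n * a^(n-1)) + a^n) * b \<omega>"
        unfolding X1_def by (simp add: algebra_simps)
      also have "\<dots> = of_nat (Suc n) * a^(Suc n-1) * b \<omega>" unfolding coef1 by simp
      finally have "a^n*b \<omega> + X1 \<omega>*a = of_nat (Suc n) * a^(Suc n-1) * b \<omega>" .
      moreover have "a^n*c \<omega> + X1 \<omega>*b \<omega> + X2 \<omega>*a = of_nat (Suc n) * a^(Suc n-1) * c \<omega> + of_nat (Suc n choose 2) * a^(Suc n-2) * (b \<omega>)^2"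
        using coef2[of a n "c \<omega>" "b \<omega>"] unfolding X1_def X2_def by (simp add: algebra_simps)
      ultimately show ?thesis by (simp add: mult.commute)
    qed
    finally have calc: "P \<epsilon> \<omega> ^ Suc n = a^Suc n + of_real \<epsilon> * (of_nat (Suc n) * a^(Suc n-1) * b \<omega>)
         + (of_real \<epsilon>)^2 * (of_nat (Suc n) * a^(Suc n-1) * c \<omega> + of_nat (Suc n choose 2) * a^(Suc n-2) * (b \<omega>)^2)
         + (of_real \<epsilon>)^3 * B3' \<omega> + (of_real \<epsilon>)^4 * R' \<epsilon> \<omega>" by simp
    show "(a + of_real \<epsilon> * b \<omega> + (of_real \<epsilon>)^2 * c \<omega> + (of_real \<epsilon>)^3 * d \<omega> + (of_real \<epsilon>)^4 * e \<epsilon> \<omega>)^Suc n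
       = a^Suc n + of_real \<epsilon> * (of_nat (Suc n) * a^(Suc n-1) * b \<omega>)
         + (of_real \<epsilon>)^2 * (of_nat (Suc n) * a^(Suc n-1) * c \<omega> + of_nat (Suc n choose 2) * a^(Suc n-2) * (b \<omega>)^2)
         + (of_real \<epsilon>)^3 * B3' \<omega> + (of_real \<epsilon>)^4 * R' \<epsilon> \<omega>"
      using calc by (simp only: P_def)
  qed
qed



lemma G_meas: "G m \<delta> (\<lambda>_. b) \<Longrightarrow> b \<in> borel_measurable (omega_law m)"
  unfolding G_def by auto

lemma oddf_int: "G m \<delta> (\<lambda>_. b) \<Longrightarrow> oddf m b \<Longrightarrow> (\<integral>\<omega>. b \<omega> \<partial>omega_law m) = 0"
  by (rule integral_odd[where S=UNIV]) (auto simp: oddf_def dest: G_meas)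

lemma moment_exp:
  fixes a :: complex
  assumes Gb: "G m \<delta> (\<lambda>_. b)" and Gc: "G m \<delta> (\<lambda>_. c)" and Gd: "G m \<delta> (\<lambda>_. d)" and Ge: "G m \<delta> e"
    and d1: "\<delta> \<le> 1"
    and ob: "oddf m b" and od: "oddf m d" and ec: "evenf m c"
    and Ueq: "\<And>\<epsilon> \<omega>. \<omega> \<in> space (omega_law m) \<Longrightarrow> \<bar>\<epsilon>\<bar> < \<delta> \<Longrightarrow>
       U \<epsilon> \<omega> = a + of_real \<epsilon> * b \<omega> + (of_real \<epsilon>)^2 * c \<omega> + (of_real \<epsilon>)^3 * d \<omega> + (of_real \<epsilon>)^4 * e \<epsilon> \<omega>"
  shows "\<exists>K. \<forall>\<epsilon>. \<bar>\<epsilon>\<bar> < \<delta> \<longrightarrow> norm (moment m n U \<epsilon> - (a^n + (of_real \<epsilon>)^2 *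
      (of_nat n * a^(n-1) * (\<integral>\<omega>. c \<omega> \<partial>omega_law m) + of_nat (n choose 2) * a^(n-2) * (\<integral>\<omega>. (b \<omega>)^2 \<partial>omega_law m))))
      \<le> K * \<epsilon>^4"
proof -
  interpret prob_space "omega_law m" by (rule prob_L)
  obtain B3 R where GB3: "G m \<delta> (\<lambda>_. B3)" and oB3: "oddf m B3" and GR: "G m \<delta> R"
    and eq: "\<And>\<epsilon> \<omega>. (a + of_real \<epsilon> * b \<omega> + (of_real \<epsilon>)^2 * c \<omega> + (of_real \<epsilon>)^3 * d \<omega> + (of_real \<epsilon>)^4 * e \<epsilon> \<omega>)^n
       = a^n + of_real \<epsilon> * (of_nat n * a^(n-1) * b \<omega>)
         + (of_real \<epsilon>)^2 * (of_nat n * a^(n-1) * c \<omega> + of_nat (n choose 2) * a^(n-2) * (b \<omega>)^2)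
         + (of_real \<epsilon>)^3 * B3 \<omega> + (of_real \<epsilon>)^4 * R \<epsilon> \<omega>"
    using pow_exp[OF Gb Gc Gd Ge d1 ob od ec, of a n] by blast
  obtain K where K: "\<And>\<epsilon>. \<bar>\<epsilon>\<bar> < \<delta> \<Longrightarrow> norm (\<integral>\<omega>. R \<epsilon> \<omega> \<partial>omega_law m) \<le> K"
    using G_integral_bound[OF GR] by blast
  have Gb2: "G m \<delta> (\<lambda>_ \<omega>. (b \<omega>)^2)" by (rule G_pow[OF Gb])
  show ?thesis
  proof (intro exI allI impI)
    fix \<epsilon> :: real assume e: "\<bar>\<epsilon>\<bar> < \<delta>"
    let ?z = "complex_of_real \<epsilon>"
    have i0: "\<bar>0::real\<bar> < \<delta>" using e by linarith
    have ib: "integrable (omega_law m) b" using G_integrable[OF Gb i0] .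
    have ic: "integrable (omega_law m) c" using G_integrable[OF Gc i0] .
    have ib2: "integrable (omega_law m) (\<lambda>\<omega>. (b \<omega>)^2)" using G_integrable[OF Gb2 i0] .
    have iB3: "integrable (omega_law m) B3" using G_integrable[OF GB3 i0] .
    have iR: "integrable (omega_law m) (R \<epsilon>)" using G_integrable[OF GR e] .
    have "moment m n U \<epsilon> = (\<integral>\<omega>. a^n + ?z * (of_nat n * a^(n-1) * b \<omega>)
         + ?z^2 * (of_nat n * a^(n-1) * c \<omega> + of_nat (n choose 2) * a^(n-2) * (b \<omega>)^2)
         + ?z^3 * B3 \<omega> + ?z^4 * R \<epsilon> \<omega> \<partial>omega_law m)"
      unfolding moment_def by (rule Bochner_Integration.integral_cong) (simp_all add: Ueq e eq)
    also have "\<dots> = a^n + ?z * (of_nat n * a^(n-1) * (\<integral>\<omega>. b \<omega> \<partial>omega_law m))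
         + ?z^2 * (of_nat n * a^(n-1) * (\<integral>\<omega>. c \<omega> \<partial>omega_law m) + of_nat (n choose 2) * a^(n-2) * (\<integral>\<omega>. (b \<omega>)^2 \<partial>omega_law m))
         + ?z^3 * (\<integral>\<omega>. B3 \<omega> \<partial>omega_law m) + ?z^4 * (\<integral>\<omega>. R \<epsilon> \<omega> \<partial>omega_law m)"
      using ib ic ib2 iB3 iR by (simp add: prob_space)
    also have "\<dots> = a^n + ?z^2 * (of_nat n * a^(n-1) * (\<integral>\<omega>. c \<omega> \<partial>omega_law m) + of_nat (n choose 2) * a^(n-2) * (\<integral>\<omega>. (b \<omega>)^2 \<partial>omega_law m))
         + ?z^4 * (\<integral>\<omega>. R \<epsilon> \<omega> \<partial>omega_law m)"
      using oddf_int[OF Gb ob] oddf_int[OF GB3 oB3] by simp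
    finally have "norm (moment m n U \<epsilon> - (a^n + ?z^2 * (of_nat n * a^(n-1) * (\<integral>\<omega>. c \<omega> \<partial>omega_law m) + of_nat (n choose 2) * a^(n-2) * (\<integral>\<omega>. (b \<omega>)^2 \<partial>omega_law m))))
       = \<epsilon>^4 * norm (\<integral>\<omega>. R \<epsilon> \<omega> \<partial>omega_law m)"
      by (simp add: norm_mult norm_power)
    also have "\<dots> \<le> \<epsilon>^4 * K" using K[OF e] by (intro mult_left_mono) auto
    finally show "norm (moment m n U \<epsilon> - (a^n + ?z^2 * (of_nat n * a^(n-1) * (\<integral>\<omega>. c \<omega> \<partial>omega_law m) + of_nat (n choose 2) * a^(n-2) * (\<integral>\<omega>. (b \<omega>)^2 \<partial>omega_law m))))
       \<le> K * \<epsilon>^4" by (simp add: mult.commute)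
  qed
qed



definition tq :: "nat \<Rightarrow> (nat list \<Rightarrow> complex) \<Rightarrow> nat \<Rightarrow> (nat \<Rightarrow> real) \<Rightarrow> complex" where
  "tq m D q \<omega> = (\<Sum>xs\<in>multi_idx m q. complex_of_real (prod_list (map \<omega> xs)) * D xs)"

lemma finite_multi_idx: "finite (multi_idx m q)"
proof -
  have "multi_idx m q = {xs. set xs \<subseteq> {..<m} \<and> length xs = q}" unfolding multi_idx_def by auto
  then show ?thesis using finite_lists_length_eq[of "{..<m}" q] by simp
qed

lemma prod_meas: "set xs \<subseteq> {..<m} \<Longrightarrow> (\<lambda>\<omega>. prod_list (map \<omega> xs)) \<in> borel_measurable (omega_law m)"
proof (induction xs)
  case Nil then show ?case by simp
next
  case (Cons i xs)
  then have "i < m" by auto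
  then have "(\<lambda>\<omega>. \<omega> i) \<in> borel_measurable (omega_law m)" by (rule meas_comp)
  with Cons show ?case by (simp add: borel_measurable_times)
qed

lemma prod_bound: "\<omega> \<in> obox m \<Longrightarrow> set xs \<subseteq> {..<m} \<Longrightarrow> \<bar>prod_list (map \<omega> xs)\<bar> \<le> 1"
proof (induction xs)
  case Nil then show ?case by simp
next
  case (Cons i xs)
  then have "\<bar>\<omega> i\<bar> \<le> 1" unfolding obox_def by auto
  with Cons show ?case by (simp add: abs_mult mult_le_one)
qed

lemma prod_flip: "set xs \<subseteq> {..<m} \<Longrightarrow> prod_list (map (oflip m UNIV \<omega>) xs) = (-1)^length xs * prod_list (map \<omega> xs)"
  by (induction xs) (auto simp: oflip_def)

lemma G_prod: "set xs \<subseteq> {..<m} \<Longrightarrow> G m \<delta> (\<lambda>_ \<omega>. complex_of_real (prod_list (map \<omega> xs)))"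
  unfolding G_def
proof (intro conjI allI exI[of _ 1] impI)
  fix \<epsilon> \<omega> assume "set xs \<subseteq> {..<m}" "\<bar>\<epsilon>\<bar> < \<delta>" "\<omega> \<in> obox m"
  then show "norm (complex_of_real (prod_list (map \<omega> xs))) \<le> 1" using prod_bound by simp
next
  fix \<epsilon> :: real assume "set xs \<subseteq> {..<m}"
  then show "(\<lambda>\<omega>. complex_of_real (prod_list (map \<omega> xs))) \<in> borel_measurable (omega_law m)"
    using measurable_compose[OF prod_meas borel_measurable_of_real] by auto
qed

lemma G_tq: "G m \<delta> (\<lambda>_. tq m D q)"
  unfolding tq_def
  by (intro G_sum finite_multi_idx G_mult G_const G_prod) (auto simp: multi_idx_def)

lemma tq_flip: "tq m D q (oflip m UNIV \<omega>) = (-1)^q * tq m D q \<omega>"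
  unfolding tq_def sum_distrib_left
  by (intro sum.cong refl) (auto simp: multi_idx_def prod_flip)

lemma multi_idx_1: "multi_idx m 1 = (\<lambda>i. [i]) ` {..<m}"
  unfolding multi_idx_def by (auto simp: length_Suc_conv)

lemma multi_idx_2: "multi_idx m 2 = (\<lambda>p. [fst p, snd p]) ` ({..<m} \<times> {..<m})"
  unfolding multi_idx_def by (auto simp: length_Suc_conv numeral_2_eq_2 image_iff)

lemma t1_eq: "tq m D 1 \<omega> = (\<Sum>i<m. complex_of_real (\<omega> i) * D [i])"
  unfolding tq_def multi_idx_1 by (subst sum.reindex) (auto simp: inj_on_def)

lemma t2_eq: "tq m D 2 \<omega> = (\<Sum>i<m. \<Sum>j<m. complex_of_real (\<omega> i * \<omega> j) * D [i, j])"
  unfolding tq_def multi_idx_2 by (subst sum.reindex) (auto simp: inj_on_def sum.cartesian_product case_prod_beta)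



lemma int_pair: "i < m \<Longrightarrow> j < m \<Longrightarrow> integrable (omega_law m) (\<lambda>\<omega>. \<omega> i * \<omega> j)"
proof -
  assume ij: "i < m" "j < m"
  interpret prob_space "omega_law m" by (rule prob_L)
  have me: "(\<lambda>\<omega>. \<omega> i * \<omega> j) \<in> borel_measurable (omega_law m)"
    using meas_comp[OF ij(1)] meas_comp[OF ij(2)] by (rule borel_measurable_times)
  show ?thesis
  proof (rule integrable_const_bound[where B=1])
    show "AE x in omega_law m. norm (x i * x j) \<le> 1"
      using AE_in_box[of m] proof eventually_elim
      case (elim \<omega>) then have "\<bar>\<omega> i\<bar> \<le> 1" "\<bar>\<omega> j\<bar> \<le> 1" using ij unfolding obox_def by auto
      then show ?case by (simp add: abs_mult mult_le_one)
    qed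
  qed (rule me)
qed

lemma E_pair: "i < m \<Longrightarrow> j < m \<Longrightarrow> (\<integral>\<omega>. \<omega> i * \<omega> j \<partial>omega_law m) = (if i = j then 1/3 else 0)"
  using E_sq E_cross by auto

lemma int_pairc: "i < m \<Longrightarrow> j < m \<Longrightarrow> integrable (omega_law m) (\<lambda>\<omega>. complex_of_real (\<omega> i * \<omega> j) * z)"
  using int_pair by (intro integrable_mult_left integrable_of_real) auto

lemma E_double:
  "(\<integral>\<omega>. (\<Sum>i<m. \<Sum>j<m. complex_of_real (\<omega> i * \<omega> j) * F i j) \<partial>omega_law m) = (\<Sum>i<m. complex_of_real (1/3) * F i i)"
proof -
  have ii: "integrable (omega_law m) (\<lambda>\<omega>. \<Sum>j<m. complex_of_real (\<omega> i * \<omega> j) * F i j)" if "i < m" for i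
    by (rule Bochner_Integration.integrable_sum) (rule int_pairc, use that in auto)
  have "(\<integral>\<omega>. (\<Sum>i<m. \<Sum>j<m. complex_of_real (\<omega> i * \<omega> j) * F i j) \<partial>omega_law m)
      = (\<Sum>i<m. \<integral>\<omega>. (\<Sum>j<m. complex_of_real (\<omega> i * \<omega> j) * F i j) \<partial>omega_law m)"
    by (rule Bochner_Integration.integral_sum) (use ii in auto)
  also have "\<dots> = (\<Sum>i<m. \<Sum>j<m. \<integral>\<omega>. complex_of_real (\<omega> i * \<omega> j) * F i j \<partial>omega_law m)"
    by (intro sum.cong refl Bochner_Integration.integral_sum) (rule int_pairc, auto)
  also have "\<dots> = (\<Sum>i<m. \<Sum>j<m. complex_of_real (if i = j then 1/3 else 0) * F i j)"
    by (intro sum.cong refl) (simp add: E_pair integral_mult_left_zero del: of_real_divide of_real_mult)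
  also have "\<dots> = (\<Sum>i<m. complex_of_real (1/3) * F i i)"
    by (intro sum.cong refl) (simp add: if_distrib[of complex_of_real] if_distrib[of "\<lambda>x. x * _"] sum.delta cong: if_cong)
  finally show ?thesis .
qed

lemma E_t2: "(\<integral>\<omega>. tq m D 2 \<omega> \<partial>omega_law m) = (\<Sum>i<m. complex_of_real (1/3) * D [i, i])"
  unfolding t2_eq by (rule E_double)

lemma E_t1sq: "(\<integral>\<omega>. (tq m D 1 \<omega>)^2 \<partial>omega_law m) = (\<Sum>i<m. complex_of_real (1/3) * (D [i])^2)"
proof -
  have "(tq m D 1 \<omega>)^2 = (\<Sum>i<m. \<Sum>j<m. complex_of_real (\<omega> i * \<omega> j) * (D [i] * D [j]))" for \<omega>
    unfolding t1_eq power2_eq_square sum_product by (intro sum.cong refl) (simp add: algebra_simps)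
  then show ?thesis using E_double[of m "\<lambda>i j. D [i] * D [j]"] by (simp add: power2_eq_square)
qed



lemma taylor_split:
  assumes N3: "N \<ge> 3"
  shows "shape_taylor m N D \<epsilon> \<omega> = D [] + complex_of_real \<epsilon> * tq m D 1 \<omega> + (complex_of_real \<epsilon>)^2 * (tq m D 2 \<omega> / 2)
     + (complex_of_real \<epsilon>)^3 * (tq m D 3 \<omega> / 6)
     + (complex_of_real \<epsilon>)^4 * (\<Sum>q\<in>{4..N}. complex_of_real (\<epsilon>^(q-4) / fact q) * tq m D q \<omega>)"
proof -
  let ?f = "\<lambda>q. complex_of_real (\<epsilon> ^ q / fact q) * tq m D q \<omega>"
  have s: "shape_taylor m N D \<epsilon> \<omega> = D [] + sum ?f {1..N}"
    unfolding shape_taylor_def tq_def by simp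
  have "sum ?f {1..N} = ?f 1 + (?f 2 + (?f 3 + sum ?f {4..N}))"
    using N3 by (simp add: sum.atLeast_Suc_atMost numeral_eq_Suc)
  moreover have "sum ?f {4..N} = (complex_of_real \<epsilon>)^4 * (\<Sum>q\<in>{4..N}. complex_of_real (\<epsilon>^(q-4) / fact q) * tq m D q \<omega>)"
    unfolding sum_distrib_left
  proof (intro sum.cong refl)
    fix q assume "q \<in> {4..N}"
    then have "\<epsilon>^q = \<epsilon>^4 * \<epsilon>^(q-4)" by (simp add: power_add[symmetric])
    then show "?f q = (complex_of_real \<epsilon>)^4 * (complex_of_real (\<epsilon>^(q-4) / fact q) * tq m D q \<omega>)"
      by simp
  qed
  ultimately show ?thesis unfolding s by (simp add: eval_nat_numeral algebra_simps)
qed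



lemma main_n:
  fixes m N :: nat
    and U :: "real \<Rightarrow> (nat \<Rightarrow> real) \<Rightarrow> complex"
    and D :: "nat list \<Rightarrow> complex"
  assumes N3: "N \<ge> 3"
    and meas: "\<And>\<epsilon>. U \<epsilon> \<in> borel_measurable (omega_law m)"
    and taylor: "\<exists>C \<delta>. \<delta> > 0 \<and> (\<forall>\<epsilon> \<omega>. \<bar>\<epsilon>\<bar> < \<delta> \<longrightarrow> \<omega> \<in> space (omega_law m) \<longrightarrow>
                    norm (U \<epsilon> \<omega> - shape_taylor m N D \<epsilon> \<omega>) \<le> C * \<bar>\<epsilon>\<bar> ^ (N + 1))"
  shows "\<exists>K \<delta>. \<delta> > 0 \<and> (\<forall>\<epsilon>. \<bar>\<epsilon>\<bar> < \<delta> \<longrightarrow> norm (moment m n U \<epsilon> - (D [] ^ n + (complex_of_real \<epsilon>)^2 *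
      (of_nat n * D [] ^ (n-1) * ((\<Sum>i<m. complex_of_real (1/3) * D [i, i]) / 2)
       + of_nat (n choose 2) * D [] ^ (n-2) * (\<Sum>i<m. complex_of_real (1/3) * (D [i])^2))))
      \<le> K * \<epsilon>^4)"
proof -
  obtain C \<delta>0 where d0: "\<delta>0 > 0" and tC: "\<And>\<epsilon> \<omega>. \<bar>\<epsilon>\<bar> < \<delta>0 \<Longrightarrow> \<omega> \<in> space (omega_law m) \<Longrightarrow>
      norm (U \<epsilon> \<omega> - shape_taylor m N D \<epsilon> \<omega>) \<le> C * \<bar>\<epsilon>\<bar> ^ (N + 1)"
    using taylor by blast
  define \<delta> where "\<delta> = min \<delta>0 1"
  have dpos: "\<delta> > 0" and d1: "\<delta> \<le> 1" using d0 unfolding \<delta>_def by auto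
  define a where "a = D []"
  define b where "b = tq m D 1"
  define c where "c \<omega> = tq m D 2 \<omega> / 2" for \<omega>
  define d where "d \<omega> = tq m D 3 \<omega> / 6" for \<omega>
  define h where "h \<epsilon> \<omega> = (\<Sum>q\<in>{4..N}. complex_of_real (\<epsilon>^(q-4) / fact q) * tq m D q \<omega>)" for \<epsilon> \<omega>
  define e where "e \<epsilon> \<omega> = (if \<epsilon> = 0 then 0 else
     (U \<epsilon> \<omega> - (a + of_real \<epsilon> * b \<omega> + (of_real \<epsilon>)^2 * c \<omega> + (of_real \<epsilon>)^3 * d \<omega>)) / (of_real \<epsilon>)^4)" for \<epsilon> \<omega>
  have split: "shape_taylor m N D \<epsilon> \<omega> = a + of_real \<epsilon> * b \<omega> + (of_real \<epsilon>)^2 * c \<omega> + (of_real \<epsilon>)^3 * d \<omega> + (of_real \<epsilon>)^4 * h \<epsilon> \<omega>" for \<epsilon> \<omega>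
    unfolding a_def b_def c_def d_def h_def using taylor_split[OF N3] by simp
  note GG = G_add G_mult G_pow G_const G_tq
  have Gb: "G m \<delta> (\<lambda>_. b)" unfolding b_def by (rule G_tq)
  have Gc: "G m \<delta> (\<lambda>_. c)" unfolding c_def divide_inverse by (intro GG)
  have Gd: "G m \<delta> (\<lambda>_. d)" unfolding d_def divide_inverse by (intro GG)
  have Gh: "G m \<delta> h" unfolding h_def
  proof (intro G_sum G_mult G_tq finite_atLeastAtMost)
    fix q assume q: "q \<in> {4..N}"
    show "G m \<delta> (\<lambda>\<epsilon> \<omega>. complex_of_real (\<epsilon>^(q-4) / fact q))"
    proof (rule G_epsfun[where K=1])
      fix \<epsilon> :: real assume "\<bar>\<epsilon>\<bar> < \<delta>"
      then have e1: "\<bar>\<epsilon>\<bar> \<le> 1" using d1 by linarith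
      have "\<bar>\<epsilon>^(q-4)\<bar> \<le> 1" using e1 by (simp add: power_abs power_le_one)
      moreover have "(1::real) \<le> fact q" by simp
      ultimately have "\<bar>\<epsilon>^(q-4)\<bar> / fact q \<le> 1"
        by (simp add: divide_le_eq_1 del: fact_ge_1)
      then show "norm (complex_of_real (\<epsilon>^(q-4) / fact q)) \<le> 1"
        by (simp only: norm_of_real abs_divide) simp
    qed
  qed
  obtain Kh where Kh: "\<And>\<epsilon> \<omega>. \<bar>\<epsilon>\<bar> < \<delta> \<Longrightarrow> \<omega> \<in> obox m \<Longrightarrow> norm (h \<epsilon> \<omega>) \<le> Kh"
    using Gh unfolding G_def by blast
  have U0: "U 0 \<omega> = a" if "\<omega> \<in> space (omega_law m)" for \<omega>
  proof -
    have "norm (U 0 \<omega> - shape_taylor m N D 0 \<omega>) \<le> C * \<bar>0\<bar> ^ (N + 1)" using tC[OF _ that, of 0] d0 by simp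
    then have "U 0 \<omega> = shape_taylor m N D 0 \<omega>" by simp
    then show ?thesis using split[of 0 \<omega>] by simp
  qed
  have Ueq: "U \<epsilon> \<omega> = a + of_real \<epsilon> * b \<omega> + (of_real \<epsilon>)^2 * c \<omega> + (of_real \<epsilon>)^3 * d \<omega> + (of_real \<epsilon>)^4 * e \<epsilon> \<omega>"
    if "\<omega> \<in> space (omega_law m)" for \<epsilon> \<omega>
  proof (cases "\<epsilon> = 0")
    case True then show ?thesis using U0[OF that] by (simp add: e_def)
  next
    case False then show ?thesis by (simp add: e_def)
  qed
  have Ge: "G m \<delta> e"
    unfolding G_def
  proof (intro conjI allI exI impI)
    fix \<epsilon> :: real
    show "e \<epsilon> \<in> borel_measurable (omega_law m)"
    proof (cases "\<epsilon> = 0")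
      case True then show ?thesis by (simp add: e_def[abs_def])
    next
      case False
      have mb: "b \<in> borel_measurable (omega_law m)" using G_meas[OF Gb] .
      have mc: "c \<in> borel_measurable (omega_law m)" using G_meas[OF Gc] .
      have md: "d \<in> borel_measurable (omega_law m)" using G_meas[OF Gd] .
      show ?thesis using False unfolding e_def[abs_def]
        by (simp, intro borel_measurable_divide borel_measurable_diff borel_measurable_add borel_measurable_times
            borel_measurable_const meas mb mc md)
    qed
  next
    fix \<epsilon> :: real and \<omega> assume e: "\<bar>\<epsilon>\<bar> < \<delta>" and w: "\<omega> \<in> obox m"
    show "norm (e \<epsilon> \<omega>) \<le> \<bar>C\<bar> + Kh"
    proof (cases "\<epsilon> = 0")
      case True
      have "0 \<le> norm (h \<epsilon> \<omega>)" by simp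
      moreover have "norm (e \<epsilon> \<omega>) = 0" using True by (simp add: e_def)
      ultimately show ?thesis using Kh[OF e w] by linarith
    next
      case False
      have ws: "\<omega> \<in> space (omega_law m)" using w unfolding obox_def by auto
      have ed0: "\<bar>\<epsilon>\<bar> < \<delta>0" using e unfolding \<delta>_def by auto
      have e1: "\<bar>\<epsilon>\<bar> \<le> 1" using e d1 by linarith
      have ee: "e \<epsilon> \<omega> = (U \<epsilon> \<omega> - shape_taylor m N D \<epsilon> \<omega>) / (of_real \<epsilon>)^4 + h \<epsilon> \<omega>"
        using False unfolding e_def split by (simp add: field_simps)
      have "norm (U \<epsilon> \<omega> - shape_taylor m N D \<epsilon> \<omega>) \<le> C * \<bar>\<epsilon>\<bar> ^ (N + 1)" by (rule tC[OF ed0 ws])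
      also have "\<dots> \<le> \<bar>C\<bar> * \<bar>\<epsilon>\<bar> ^ 4"
      proof -
        have "\<bar>\<epsilon>\<bar> ^ (N + 1) \<le> \<bar>\<epsilon>\<bar> ^ 4" using e1 N3 by (intro power_decreasing) auto
        then have "\<bar>C\<bar> * \<bar>\<epsilon>\<bar> ^ (N + 1) \<le> \<bar>C\<bar> * \<bar>\<epsilon>\<bar> ^ 4" by (intro mult_left_mono) auto
        moreover have "C * \<bar>\<epsilon>\<bar> ^ (N + 1) \<le> \<bar>C\<bar> * \<bar>\<epsilon>\<bar> ^ (N + 1)" by (intro mult_right_mono) auto
        ultimately show ?thesis by linarith
      qed
      finally have n1: "norm (U \<epsilon> \<omega> - shape_taylor m N D \<epsilon> \<omega>) \<le> \<bar>C\<bar> * \<bar>\<epsilon>\<bar> ^ 4" .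
      have "norm ((U \<epsilon> \<omega> - shape_taylor m N D \<epsilon> \<omega>) / (of_real \<epsilon>)^4) = norm (U \<epsilon> \<omega> - shape_taylor m N D \<epsilon> \<omega>) / \<bar>\<epsilon>\<bar>^4"
        by (simp add: norm_divide norm_power)
      also have "\<dots> \<le> \<bar>C\<bar>" using n1 False by (simp add: divide_le_eq)
      finally have "norm ((U \<epsilon> \<omega> - shape_taylor m N D \<epsilon> \<omega>) / (of_real \<epsilon>)^4) \<le> \<bar>C\<bar>" .
      then show ?thesis unfolding ee using Kh[OF e w] norm_triangle_ineq[of "(U \<epsilon> \<omega> - shape_taylor m N D \<epsilon> \<omega>) / (of_real \<epsilon>)^4" "h \<epsilon> \<omega>"]
        by linarith
    qed
  qed
  have ob: "oddf m b" unfolding oddf_def b_def using tq_flip[of m D 1] by simp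
  have od: "oddf m d" unfolding oddf_def d_def using tq_flip[of m D 3] by simp
  have ec: "evenf m c" unfolding evenf_def c_def using tq_flip[of m D 2] by simp
  obtain K where K: "\<And>\<epsilon>. \<bar>\<epsilon>\<bar> < \<delta> \<Longrightarrow> norm (moment m n U \<epsilon> - (a^n + (of_real \<epsilon>)^2 *
      (of_nat n * a^(n-1) * (\<integral>\<omega>. c \<omega> \<partial>omega_law m) + of_nat (n choose 2) * a^(n-2) * (\<integral>\<omega>. (b \<omega>)^2 \<partial>omega_law m))))
      \<le> K * \<epsilon>^4"
    using moment_exp[OF Gb Gc Gd Ge d1 ob od ec, of U a n] Ueq by blast
  have ic: "(\<integral>\<omega>. c \<omega> \<partial>omega_law m) = (\<Sum>i<m. complex_of_real (1/3) * D [i, i]) / 2"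
    unfolding c_def using E_t2[of m D] by simp
  have ib: "(\<integral>\<omega>. (b \<omega>)^2 \<partial>omega_law m) = (\<Sum>i<m. complex_of_real (1/3) * (D [i])^2)"
    unfolding b_def by (rule E_t1sq)
  show ?thesis using K dpos unfolding ic ib a_def by blast
qed



theorem theorem4p1:
  fixes m N :: nat
    and U :: "real \<Rightarrow> (nat \<Rightarrow> real) \<Rightarrow> complex"
    and D :: "nat list \<Rightarrow> complex"
  assumes N3: "N \<ge> 3"
    and meas: "\<And>\<epsilon>. U \<epsilon> \<in> borel_measurable (omega_law m)"
    and taylor: "\<exists>C \<delta>. \<delta> > 0 \<and> (\<forall>\<epsilon> \<omega>. \<bar>\<epsilon>\<bar> < \<delta> \<longrightarrow> \<omega> \<in> space (omega_law m) \<longrightarrow>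
                    norm (U \<epsilon> \<omega> - shape_taylor m N D \<epsilon> \<omega>) \<le> C * \<bar>\<epsilon>\<bar> ^ (N + 1))"
  shows
    "(\<exists>C \<delta>. \<delta> > 0 \<and> (\<forall>\<epsilon>. \<bar>\<epsilon>\<bar> < \<delta> \<longrightarrow>
        norm (moment m 1 U \<epsilon> -
          (D [] + complex_of_real (\<epsilon>^2 / fact 3) * (\<Sum>i<m. D [i, i])))
        \<le> C * \<epsilon> ^ 4))
   \<and> (\<exists>C \<delta>. \<delta> > 0 \<and> (\<forall>\<epsilon>. \<bar>\<epsilon>\<bar> < \<delta> \<longrightarrow>
        norm (moment m 2 U \<epsilon> -
          (D [] ^ 2 + complex_of_real (\<epsilon>^2 / 3) *
             (\<Sum>i<m. (D [i]) ^ 2 + D [] * D [i, i])))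
        \<le> C * \<epsilon> ^ 4))
   \<and> (\<forall>n::nat. n > 2 \<longrightarrow> (\<exists>C \<delta>. \<delta> > 0 \<and> (\<forall>\<epsilon>. \<bar>\<epsilon>\<bar> < \<delta> \<longrightarrow>
        norm (moment m n U \<epsilon> -
          (D [] ^ n + complex_of_real (\<epsilon>^2 / 3) *
             (\<Sum>i<m. of_nat (n choose 2) * D [] ^ (n - 2) * (D [i]) ^ 2
                    + of_nat (n choose 1) * D [] ^ (n - 1) * (1/2) * D [i, i])))
        \<le> C * \<epsilon> ^ 4)))"
proof (intro conjI allI impI)
  note M = main_n[OF N3 meas taylor]
  have e1: "D [] ^ 1 + (complex_of_real \<epsilon>)^2 *
      (of_nat 1 * D [] ^ (1-1) * ((\<Sum>i<m. complex_of_real (1/3) * D [i, i]) / 2)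
       + of_nat (1 choose 2) * D [] ^ (1-2) * (\<Sum>i<m. complex_of_real (1/3) * (D [i])^2))
     = D [] + complex_of_real (\<epsilon>^2 / fact 3) * (\<Sum>i<m. D [i, i])" for \<epsilon>
    by (simp add: sum_divide_distrib[symmetric] sum_distrib_left[symmetric] eval_nat_numeral field_simps)
  show "\<exists>C \<delta>. \<delta> > 0 \<and> (\<forall>\<epsilon>. \<bar>\<epsilon>\<bar> < \<delta> \<longrightarrow>
        norm (moment m 1 U \<epsilon> -
          (D [] + complex_of_real (\<epsilon>^2 / fact 3) * (\<Sum>i<m. D [i, i])))
        \<le> C * \<epsilon> ^ 4)"
    using M[of 1] unfolding e1 .
  have e2: "D [] ^ 2 + (complex_of_real \<epsilon>)^2 *
      (of_nat 2 * D [] ^ (2-1) * ((\<Sum>i<m. complex_of_real (1/3) * D [i, i]) / 2)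
       + of_nat (2 choose 2) * D [] ^ (2-2) * (\<Sum>i<m. complex_of_real (1/3) * (D [i])^2))
     = D [] ^ 2 + complex_of_real (\<epsilon>^2 / 3) * (\<Sum>i<m. (D [i]) ^ 2 + D [] * D [i, i])" for \<epsilon>
    by (simp add: sum_divide_distrib[symmetric] sum_distrib_left[symmetric] sum.distrib field_simps)
  show "\<exists>C \<delta>. \<delta> > 0 \<and> (\<forall>\<epsilon>. \<bar>\<epsilon>\<bar> < \<delta> \<longrightarrow>
        norm (moment m 2 U \<epsilon> -
          (D [] ^ 2 + complex_of_real (\<epsilon>^2 / 3) *
             (\<Sum>i<m. (D [i]) ^ 2 + D [] * D [i, i])))
        \<le> C * \<epsilon> ^ 4)"
    using M[of 2] unfolding e2 .
  fix n :: nat assume "n > 2"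
  have e3: "D [] ^ n + (complex_of_real \<epsilon>)^2 *
      (of_nat n * D [] ^ (n-1) * ((\<Sum>i<m. complex_of_real (1/3) * D [i, i]) / 2)
       + of_nat (n choose 2) * D [] ^ (n-2) * (\<Sum>i<m. complex_of_real (1/3) * (D [i])^2))
     = D [] ^ n + complex_of_real (\<epsilon>^2 / 3) *
             (\<Sum>i<m. of_nat (n choose 2) * D [] ^ (n - 2) * (D [i]) ^ 2
                    + of_nat (n choose 1) * D [] ^ (n - 1) * (1/2) * D [i, i])" for \<epsilon>
    by (simp add: sum_divide_distrib[symmetric] sum_distrib_left[symmetric] sum.distrib field_simps)
      (simp add: sum_distrib_right[symmetric])
  show "\<exists>C \<delta>. \<delta> > 0 \<and> (\<forall>\<epsilon>. \<bar>\<epsilon>\<bar> < \<delta> \<longrightarrow>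
        norm (moment m n U \<epsilon> -
          (D [] ^ n + complex_of_real (\<epsilon>^2 / 3) *
             (\<Sum>i<m. of_nat (n choose 2) * D [] ^ (n - 2) * (D [i]) ^ 2
                    + of_nat (n choose 1) * D [] ^ (n - 1) * (1/2) * D [i, i])))
        \<le> C * \<epsilon> ^ 4)"
    using M[of n] unfolding e3 .
qed

end
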